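(* Let $M,t\ge 1$ be integers and $n=Mt$. Let $S_1,\dots,S_t\subseteq U$ be finite sets with $|S_k|\le M$ for every $k$, and let $x\in S_1\cap\dots\cap S_t$. In the single-table hashing model: 1. For every $p\in[0,1]$, $\Pr[x \text{ is placed in the tables of all } S_1,\dots,S_t \mid H(x)=p]\ge e^{-p}$. 2. Consequently, the probability that $x$ fails to be placed in the table of at least one $S_k$ is at most $\int_0^1(1-e^{-p})\,dp=e^{-1}$. 3. If $m$ tables are built with mutually independent pairs $(h_1,H_1),\dots,(h_m,H_m)$, each pair distributed as in the model, then the probability that in every one of the $m$ tables $x$ fails to be placed in the table of at least one $S_k$ is at most $e^{-m}$. In particular, for $m=28$ this is at most $2^{-40}$.
   Context: Single-table hashing model. Let $U$ be a universe of elements and let $n=Mt$ bins, indexed by $[n]=\{1,\dots,n\}$. The mapping hash $h:U\to[n]$ is a uniformly random function. The ordering hash $H:U\to[0,1]$ is a random function whose values are i.i.d. uniform on $[0,1]$, and $H$ is independent of $h$. For a finite set $S\subseteq U$ and an element $x\in S$, we say $x$ is placed in the table of $S$ if every $s\in S\setminus\{x\}$ with $h(s)=h(x)$ satisfies $H(s)>H(x)$. Equivalently, among all elements of $S$ that map to bin $h(x)$, only the one with the smallest $H$-value is stored, and it is stored in that bin. All $t$ sets use the same $h$ and $H$ within one table. *)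

theory Defs
  imports "HOL-Probability.Probability"
begin

definition hash_space :: "nat \<Rightarrow> ('a \<Rightarrow> nat) measure" where
  "hash_space n = PiM UNIV (\<lambda>_. uniform_count_measure {1..n})"

definition order_space :: "('a \<Rightarrow> real) measure" where
  "order_space = PiM UNIV (\<lambda>_. uniform_measure lborel {0..1::real})"

definition table_space :: "nat \<Rightarrow> (('a \<Rightarrow> nat) \<times> ('a \<Rightarrow> real)) measure" where
  "table_space n = hash_space n \<Otimes>\<^sub>M order_space"

definition placed :: "'a set \<Rightarrow> 'a \<Rightarrow> ('a \<Rightarrow> nat) \<Rightarrow> ('a \<Rightarrow> real) \<Rightarrow> bool" where
  "placed S x h H \<longleftrightarrow> (\<forall>s \<in> S - {x}. h s = h x \<longrightarrow> H s > H x)"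

end

theory Submission imports Defs begin
lemma meas_upd[measurable]:
  fixes x :: 'i and N :: "'b measure"
  shows "(\<lambda>(y,w). w(x:=y)) \<in> measurable (N \<Otimes>\<^sub>M PiM (UNIV-{x}) (\<lambda>_. N)) (PiM UNIV (\<lambda>_. N))"
proof (rule measurable_PiM_single')
  fix i :: 'i
  show "(\<lambda>w. (case w of (y, w) \<Rightarrow> w(x := y)) i) \<in> N \<Otimes>\<^sub>M Pi\<^sub>M (UNIV - {x}) (\<lambda>_. N) \<rightarrow>\<^sub>M N"
  proof (cases "i = x")
    case True then show ?thesis by (simp add: case_prod_beta')
  next
    case False
    have "(\<lambda>w. snd w i) \<in> N \<Otimes>\<^sub>M Pi\<^sub>M (UNIV - {x}) (\<lambda>_. N) \<rightarrow>\<^sub>M N"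
      using False measurable_compose[OF measurable_snd measurable_component_singleton[of i "UNIV - {x}" "\<lambda>_. N"]]
      by simp
    then show ?thesis using False by (simp add: case_prod_beta')
  qed
next
  show "(\<lambda>(y,w). w(x:=y)) \<in> space (N \<Otimes>\<^sub>M Pi\<^sub>M (UNIV - {x}) (\<lambda>_. N)) \<rightarrow> (\<Pi>\<^sub>E i\<in>UNIV. space N)"
  proof
    fix z assume "z \<in> space (N \<Otimes>\<^sub>M Pi\<^sub>M (UNIV - {x}) (\<lambda>_. N))"
    then have z1: "fst z \<in> space N" and z2: "snd z \<in> PiE (UNIV - {x}) (\<lambda>_. space N)"
      by (simp_all add: space_pair_measure space_PiM mem_Times_iff)
    have "\<forall>i\<in>UNIV - {x}. snd z i \<in> space N" using z2 by (simp add: PiE_iff)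
    then have "\<forall>i. ((snd z)(x := fst z)) i \<in> space N" using z1 by simp
    then show "(case z of (y, w) \<Rightarrow> w(x := y)) \<in> (\<Pi>\<^sub>E i\<in>UNIV. space N)"
      by (simp add: PiE_iff case_prod_beta')
  qed
qed

lemma prod_nn_PiM:
  fixes N :: "'b measure" and I J :: "'i set"
  assumes N: "prob_space N" and J: "finite J" "J \<subseteq> I"
    and f[measurable]: "\<And>j. j \<in> J \<Longrightarrow> f j \<in> borel_measurable N"
  shows "(\<integral>\<^sup>+w. (\<Prod>j\<in>J. f j (w j)) \<partial>PiM I (\<lambda>_. N)) = (\<Prod>j\<in>J. \<integral>\<^sup>+y. f j y \<partial>N)"
proof -
  interpret N: prob_space N by fact
  interpret P: product_prob_space "\<lambda>_. N" I by standard
  have "(\<integral>\<^sup>+w. (\<Prod>j\<in>J. f j (w j)) \<partial>PiM I (\<lambda>_. N)) = (\<integral>\<^sup>+w. (\<Prod>j\<in>J. f j (restrict w J j)) \<partial>PiM I (\<lambda>_. N))"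
    by (intro nn_integral_cong prod.cong) auto
  also have "\<dots> = (\<integral>\<^sup>+w. (\<Prod>j\<in>J. f j (w j)) \<partial>distr (PiM I (\<lambda>_. N)) (PiM J (\<lambda>_. N)) (\<lambda>w. restrict w J))"
    using J by (subst nn_integral_distr) (auto intro!: measurable_restrict_subset borel_measurable_prod_ennreal)
  also have "\<dots> = (\<integral>\<^sup>+w. (\<Prod>j\<in>J. f j (w j)) \<partial>PiM J (\<lambda>_. N))"
    using J by (simp add: P.distr_PiM_restrict_finite)
  also have "\<dots> = (\<Prod>j\<in>J. \<integral>\<^sup>+y. f j y \<partial>N)"
    using J by (intro P.product_nn_integral_prod) auto
  finally show ?thesis .
qed

lemma split_coord:
  fixes N :: "'b measure" and x :: 'i
  assumes N: "prob_space N" and f[measurable]: "f \<in> borel_measurable (PiM UNIV (\<lambda>_. N))"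
  shows "(\<integral>\<^sup>+w. f w \<partial>PiM UNIV (\<lambda>_. N)) = (\<integral>\<^sup>+y. \<integral>\<^sup>+w. f (w(x:=y)) \<partial>PiM (UNIV-{x}) (\<lambda>_. N) \<partial>N)"
proof -
  interpret N: prob_space N by fact
  interpret R: prob_space "PiM (UNIV-{x}) (\<lambda>_. N)" by (rule prob_space_PiM) (rule N)
  have ins: "insert x (UNIV - {x}) = UNIV" by auto
  have eq: "distr (N \<Otimes>\<^sub>M PiM (UNIV-{x}) (\<lambda>_. N)) (PiM UNIV (\<lambda>_. N)) (\<lambda>(y,w). w(x:=y)) = PiM UNIV (\<lambda>_. N)"
    using distr_pair_PiM_eq_PiM[of "UNIV-{x}" "\<lambda>_. N" x] N by (simp add: ins)
  have "(\<integral>\<^sup>+w. f w \<partial>PiM UNIV (\<lambda>_. N)) = (\<integral>\<^sup>+w. f w \<partial>distr (N \<Otimes>\<^sub>M PiM (UNIV-{x}) (\<lambda>_. N)) (PiM UNIV (\<lambda>_. N)) (\<lambda>(y,w). w(x:=y)))"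
    by (simp add: eq)
  also have "\<dots> = (\<integral>\<^sup>+z. f ((\<lambda>(y,w). w(x:=y)) z) \<partial>(N \<Otimes>\<^sub>M PiM (UNIV-{x}) (\<lambda>_. N)))"
    by (rule nn_integral_distr) measurable
  also have "\<dots> = (\<integral>\<^sup>+y. \<integral>\<^sup>+w. f (w(x:=y)) \<partial>PiM (UNIV-{x}) (\<lambda>_. N) \<partial>N)"
    apply (subst R.nn_integral_fst[symmetric])
     apply (rule measurable_compose[OF meas_upd f])
    apply simp
    done
  finally show ?thesis .
qed

lemma ennreal_prod_indicator:
  fixes A :: "'i \<Rightarrow> 'b set"
  assumes "finite U"
  shows "(\<Prod>s\<in>U. indicator (A s) (w s) :: ennreal) = of_bool (\<forall>s\<in>U. w s \<in> A s)"
  using assms by (induct U rule: finite_induct) (auto simp: indicator_def)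

lemma meas_ucm[measurable]: "f \<in> borel_measurable (uniform_count_measure A)"
  by (simp add: measurable_cong_sets[OF sets_uniform_count_measure_count_space refl])

lemma nn_integral_ucm:
  fixes g :: "'b \<Rightarrow> real"
  assumes A: "finite A" "A \<noteq> {}" and g: "\<And>a. a\<in>A \<Longrightarrow> 0 \<le> g a"
  shows "(\<integral>\<^sup>+a. ennreal (g a) \<partial>uniform_count_measure A) = ennreal ((\<Sum>a\<in>A. g a) / card A)"
proof -
  have c: "0 < card A" using A by (simp add: card_gt_0_iff)
  have "(\<integral>\<^sup>+a. ennreal (g a) \<partial>uniform_count_measure A) = (\<Sum>a\<in>A. ennreal (1 / real (card A)) * ennreal (g a))"
    unfolding uniform_count_measure_def using A by (simp add: nn_integral_point_measure_finite)
  also have "\<dots> = (\<Sum>a\<in>A. ennreal (g a / card A))"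
  proof (intro sum.cong refl)
    fix a assume a: "a \<in> A"
    show "ennreal (1 / real (card A)) * ennreal (g a) = ennreal (g a / card A)"
      using g[OF a] c by (simp add: ennreal_mult[symmetric])
  qed
  also have "\<dots> = ennreal (\<Sum>a\<in>A. g a / card A)"
    using g by (intro sum_ennreal) auto
  also have "(\<Sum>a\<in>A. g a / card A) = (\<Sum>a\<in>A. g a) / card A"
    by (simp add: sum_divide_distrib)
  finally show ?thesis .
qed

lemma L_prob: "prob_space (uniform_measure lborel {0..1::real})"
  by (rule prob_space_uniform_measure) auto

lemma L_Ioi:
  assumes "0 \<le> p" "p \<le> 1"
  shows "emeasure (uniform_measure lborel {0..1::real}) {p<..} = ennreal (1 - p)"
proof -
  have "{0..1} \<inter> {p<..} = {p<..1::real}" using assms by auto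
  then show ?thesis using assms by (subst emeasure_uniform_measure) (auto simp: divide_ennreal_def)
qed

lemma exp_bound:
  fixes n N :: nat and p :: real
  assumes n: "1 \<le> n" and N: "N \<le> n - 1" and p: "0 \<le> p" "p \<le> 1"
  shows "exp (- p) \<le> (1 - p / real n) ^ N"
proof (cases "n = 1")
  case True
  then show ?thesis using N p by simp
next
  case False
  then have n2: "2 \<le> n" using n by simp
  define a where "a = p / (real n - 1)"
  have a0: "0 \<le> a" using n2 p by (simp add: a_def)
  have q0: "0 \<le> 1 - p / real n" and q1: "1 - p / real n \<le> 1" using n2 p by (auto simp: field_simps)
  have "1 + a \<le> exp a" by (rule exp_ge_add_one_self)
  then have "exp (-a) \<le> 1 / (1 + a)" using a0 by (simp add: exp_minus field_simps)
  also have "1 / (1 + a) \<le> 1 - p / real n"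
  proof -
    have nn: "real n - 1 > 0" using n2 by simp
    have "1 / (1 + a) = (real n - 1) / (real n - 1 + p)" using nn by (simp add: a_def field_simps)
    also have "\<dots> \<le> 1 - p / real n"
    proof -
      have "p * p \<le> p" using p by (simp add: mult_le_one mult_left_le)
      then have "(real n - 1) * real n \<le> (real n - p) * (real n - 1 + p)" by (simp add: algebra_simps)
      then show ?thesis using nn p n2 by (simp add: field_simps)
    qed
    finally show ?thesis .
  qed
  finally have e1: "exp (-a) \<le> 1 - p / real n" .
  have "exp (-p) = exp (-a) ^ (n - 1)"
    using n2 by (simp add: a_def exp_of_nat_mult[symmetric] of_nat_diff)
  also have "\<dots> \<le> (1 - p / real n) ^ (n - 1)" by (rule power_mono[OF e1]) simp
  also have "\<dots> \<le> (1 - p / real n) ^ N" by (rule power_decreasing[OF N q0 q1])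
  finally show ?thesis .
qed

lemma e28: "exp (- real (28::nat)) \<le> 1 / 2 ^ 40"
proof -
  have "(1 + 1 / (100::real)) powr 100 < exp 1" by (rule exp_1_gt_powr) simp
  then have a: "(101/100::real) ^ 100 < exp 1" by (simp add: powr_realpow)
  have b: "(27/10::real) \<le> (101/100) ^ 100" by (simp add: power_divide)
  have c: "(27/10::real) ^ 28 \<le> exp 1 ^ 28" using a b by (intro power_mono) auto
  have d: "(2::real) ^ 40 \<le> (27/10) ^ 28" by (simp add: power_divide)
  have "exp (real (28::nat)) = exp 1 ^ 28" by (simp add: exp_of_nat_mult[symmetric])
  moreover have "(2::real) ^ 40 \<le> exp 1 ^ 28" by (rule order_trans[OF d c])
  ultimately have "2 ^ 40 \<le> exp (real (28::nat))" by simp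
  then show ?thesis by (simp add: exp_minus field_simps)
qed

lemma pred_eq_finite_cs[measurable (raw)]:
  fixes f g :: "'b \<Rightarrow> nat"
  assumes "f \<in> measurable M (count_space A)" "g \<in> measurable M (count_space A)" "finite A"
  shows "Measurable.pred M (\<lambda>x. f x = g x)"
proof -
  have "Measurable.pred M (\<lambda>x. \<exists>v\<in>A. f x = v \<and> g x = v)"
    using assms by measurable
  moreover have "\<And>x. x \<in> space M \<Longrightarrow> (\<exists>v\<in>A. f x = v \<and> g x = v) = (f x = g x)"
    using assms(1)[THEN measurable_space] by auto
  ultimately have "{x\<in>space M. f x = g x} = {x\<in>space M. \<exists>v\<in>A. f x = v \<and> g x = v}"
    by blast
  with \<open>Measurable.pred M (\<lambda>x. \<exists>v\<in>A. f x = v \<and> g x = v)\<close> show ?thesis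
    unfolding Measurable.pred_def by simp
qed

theorem mainTheorem2:
  fixes M t :: nat and S :: "nat \<Rightarrow> 'a set" and x :: 'a
  assumes "M \<ge> 1" and "t \<ge> 1"
    and "\<And>k. k \<in> {1..t} \<Longrightarrow> finite (S k)"
    and "\<And>k. k \<in> {1..t} \<Longrightarrow> card (S k) \<le> M"
    and "\<And>k. k \<in> {1..t} \<Longrightarrow> x \<in> S k"
  shows
    "(\<forall>p \<in> {0..1::real}.
        measure (table_space (M * t))
          {(h, H) \<in> space (table_space (M * t)).
             \<forall>k \<in> {1..t}. placed (S k) x h (H(x := p))} \<ge> exp (- p))
     \<and> {(h, H) \<in> space (table_space (M * t)).
             \<exists>k \<in> {1..t}. \<not> placed (S k) x h H} \<in> sets (table_space (M * t))
     \<and> measure (table_space (M * t))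
          {(h, H) \<in> space (table_space (M * t)).
             \<exists>k \<in> {1..t}. \<not> placed (S k) x h H}
        \<le> (LBINT p=0..1. 1 - exp (- p))
     \<and> (LBINT p=0..1. 1 - exp (- p)) = exp (- 1)
     \<and> (\<forall>m::nat.
        {\<omega> \<in> space (PiM {..<m} (\<lambda>_. table_space (M * t))).
             \<forall>j < m. \<exists>k \<in> {1..t}. \<not> placed (S k) x (fst (\<omega> j)) (snd (\<omega> j))}
          \<in> sets (PiM {..<m} (\<lambda>_. table_space (M * t)))
        \<and> measure (PiM {..<m} (\<lambda>_. table_space (M * t)))
          {\<omega> \<in> space (PiM {..<m} (\<lambda>_. table_space (M * t))).
             \<forall>j < m. \<exists>k \<in> {1..t}. \<not> placed (S k) x (fst (\<omega> j)) (snd (\<omega> j))}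
        \<le> exp (- real m))
     \<and> measure (PiM {..<28} (\<lambda>_. table_space (M * t)))
          {\<omega> \<in> space (PiM {..<28::nat} (\<lambda>_. table_space (M * t))).
             \<forall>j < 28. \<exists>k \<in> {1..t}. \<not> placed (S k) x (fst (\<omega> j)) (snd (\<omega> j))}
        \<le> 1 / 2 ^ 40"
proof -
  define n where "n = M * t"
  have n1: "1 \<le> n" using assms(1,2) by (simp add: n_def)
  define U where "U = (\<Union>k\<in>{1..t}. S k) - {x}"
  have finU: "finite U" using assms(3) by (simp add: U_def)
  have xU: "x \<notin> U" by (simp add: U_def)
  have cardU: "card U \<le> n - 1"
  proof -
    have eqU: "U = (\<Union>k\<in>{1..t}. S k - {x})" by (auto simp: U_def)
    have "card U \<le> (\<Sum>k\<in>{1..t}. card (S k - {x}))" unfolding eqU by (rule card_UN_le) simp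
    also have "\<dots> \<le> (\<Sum>k\<in>{1..t}. M - 1)"
    proof (intro sum_mono)
      fix k assume k: "k \<in> {1..t}"
      show "card (S k - {x}) \<le> M - 1" using assms(3-5)[OF k] by (simp add: card_Diff_singleton)
    qed
    also have "\<dots> = t * (M - 1)" by simp
    also have "\<dots> \<le> n - 1"
    proof -
      have "t * (M - 1) = M * t - t" by (simp add: diff_mult_distrib2 mult.commute)
      moreover have "t \<le> M * t" using assms(1) by simp
      ultimately show ?thesis using assms(2) by (simp add: n_def)
    qed
    finally show ?thesis .
  qed
  define hash where "hash = (hash_space n :: ('a \<Rightarrow> nat) measure)"
  define L where "L = uniform_measure lborel {0..1::real}"
  define ord where "ord = (order_space :: ('a \<Rightarrow> real) measure)"
  define T where "T = (table_space n :: (('a \<Rightarrow> nat) \<times> ('a \<Rightarrow> real)) measure)"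
  define C where "C = uniform_count_measure {1..n}"
  have hash_eq: "hash = PiM UNIV (\<lambda>_. C)" by (simp add: hash_def hash_space_def C_def)
  have ord_eq: "ord = PiM UNIV (\<lambda>_. L)" by (simp add: ord_def order_space_def L_def)
  have T_eq: "T = hash \<Otimes>\<^sub>M ord" by (simp add: T_def table_space_def hash_def ord_def)
  have C_prob: "prob_space C" using n1 by (simp add: C_def prob_space_uniform_count_measure)
  have Lp: "prob_space L" by (simp add: L_def L_prob)
  interpret Cp: prob_space C by (rule C_prob)
  interpret Lp: prob_space L by (rule Lp)
  interpret Hs: prob_space hash unfolding hash_eq by (rule prob_space_PiM) (rule C_prob)
  interpret Os: prob_space ord unfolding ord_eq by (rule prob_space_PiM) (rule Lp)
  interpret HO: pair_prob_space hash ord by unfold_locales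
  interpret HL: pair_prob_space hash L by unfold_locales
  interpret Ts: prob_space T unfolding T_eq by (rule prob_space_pair) unfold_locales
  have sets_L: "sets L = sets borel" by (simp add: L_def)
  have space_hash: "\<And>h. h \<in> space hash \<Longrightarrow> h x \<in> {1..n}"
    by (auto simp: hash_eq space_PiM C_def space_uniform_count_measure)

  have meas_E: "\<And>y. {(h,H)\<in>space T. \<forall>s\<in>U. h s = h x \<longrightarrow> y < H s} \<in> sets T"
  proof -
    fix y :: real
    have "Measurable.pred T (\<lambda>z. \<forall>s\<in>U. fst z s = fst z x \<longrightarrow> y < snd z s)"
      unfolding T_eq hash_eq ord_eq C_def L_def using finU by measurable
    moreover have "{(h,H)\<in>space T. \<forall>s\<in>U. h s = h x \<longrightarrow> y < H s} = {z\<in>space T. \<forall>s\<in>U. fst z s = fst z x \<longrightarrow> y < snd z s}"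
      by auto
    ultimately show "{(h,H)\<in>space T. \<forall>s\<in>U. h s = h x \<longrightarrow> y < H s} \<in> sets T"
      unfolding Measurable.pred_def by simp
  qed
  define A where "A = {(h,H)\<in>space T. \<forall>s\<in>U. h s = h x \<longrightarrow> H x < H s}"
  have meas_A: "A \<in> sets T"
  proof -
    have "Measurable.pred T (\<lambda>z. \<forall>s\<in>U. fst z s = fst z x \<longrightarrow> snd z x < snd z s)"
      unfolding T_eq hash_eq ord_eq C_def L_def using finU by measurable
    moreover have "A = {z\<in>space T. \<forall>s\<in>U. fst z s = fst z x \<longrightarrow> snd z x < snd z s}"
      by (auto simp: A_def)
    ultimately show ?thesis
      unfolding Measurable.pred_def by simp
  qed

  have FUB: "\<And>E. E \<in> sets T \<Longrightarrow> emeasure T E = (\<integral>\<^sup>+h. \<integral>\<^sup>+H. indicator E (h,H) \<partial>ord \<partial>hash)"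
  proof -
    fix E assume E: "E \<in> sets T"
    have "emeasure T E = (\<integral>\<^sup>+z. indicator E z \<partial>T)" using E by simp
    also have "\<dots> = (\<integral>\<^sup>+h. \<integral>\<^sup>+H. indicator E (h,H) \<partial>ord \<partial>hash)"
      unfolding T_eq by (rule Os.nn_integral_fst[symmetric]) (use E T_eq in simp)
    finally show "emeasure T E = (\<integral>\<^sup>+h. \<integral>\<^sup>+H. indicator E (h,H) \<partial>ord \<partial>hash)" .
  qed
  have FUB2: "\<And>R. {(h,H)\<in>space T. R h H} \<in> sets T \<Longrightarrow>
      emeasure T {(h,H)\<in>space T. R h H} = (\<integral>\<^sup>+h. \<integral>\<^sup>+H. of_bool (R h H) \<partial>ord \<partial>hash)"
  proof -
    fix R assume R: "{(h,H)\<in>space T. R h H} \<in> sets T"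
    show "emeasure T {(h,H)\<in>space T. R h H} = (\<integral>\<^sup>+h. \<integral>\<^sup>+H. of_bool (R h H) \<partial>ord \<partial>hash)"
      unfolding FUB[OF R]
    proof (intro nn_integral_cong)
      fix h H assume h: "h \<in> space hash" and H: "H \<in> space ord"
      have "(h,H) \<in> space T" using h H by (simp add: T_eq space_pair_measure)
      then show "indicator {(h,H)\<in>space T. R h H} (h,H) = (of_bool (R h H) :: ennreal)"
        by (simp add: indicator_def)
    qed
  qed

  have KEY: "\<And>p. 0 \<le> p \<Longrightarrow> p \<le> 1 \<Longrightarrow>
     emeasure T {(h,H)\<in>space T. \<forall>s\<in>U. h s = h x \<longrightarrow> p < H s} = ennreal ((1 - p / real n) ^ card U)"
  proof -
    fix p :: real assume p: "0 \<le> p" "p \<le> 1"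
    have inner: "\<And>h::'a\<Rightarrow>nat. (\<integral>\<^sup>+H. of_bool (\<forall>s\<in>U. h s = h x \<longrightarrow> p < H s) \<partial>ord) = (\<Prod>s\<in>U. ennreal (if h s = h x then 1 - p else 1))"
    proof -
      fix h :: "'a \<Rightarrow> nat"
      define B where "B = (\<lambda>s. if h s = h x then {p<..} else (UNIV::real set))"
      have Bs: "\<And>s. B s \<in> sets L" by (simp add: B_def sets_L)
      have "(\<integral>\<^sup>+H. of_bool (\<forall>s\<in>U. h s = h x \<longrightarrow> p < H s) \<partial>ord) = (\<integral>\<^sup>+H. (\<Prod>s\<in>U. indicator (B s) (H s)) \<partial>ord)"
      proof (intro nn_integral_cong)
        fix H :: "'a \<Rightarrow> real"
        have "(\<forall>s\<in>U. h s = h x \<longrightarrow> p < H s) = (\<forall>s\<in>U. H s \<in> B s)" by (auto simp: B_def)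
        then show "(of_bool (\<forall>s\<in>U. h s = h x \<longrightarrow> p < H s) :: ennreal) = (\<Prod>s\<in>U. indicator (B s) (H s))"
          by (simp add: ennreal_prod_indicator[OF finU])
      qed
      also have "\<dots> = (\<Prod>s\<in>U. \<integral>\<^sup>+y. indicator (B s) y \<partial>L)"
        unfolding ord_eq using finU Bs by (intro prod_nn_PiM[OF Lp]) auto
      also have "\<dots> = (\<Prod>s\<in>U. ennreal (if h s = h x then 1 - p else 1))"
      proof (intro prod.cong refl)
        fix s assume "s \<in> U"
        have "(\<integral>\<^sup>+y. indicator (B s) y \<partial>L) = emeasure L (B s)" using Bs by simp
        also have "\<dots> = ennreal (if h s = h x then 1 - p else 1)"
        proof (cases "h s = h x")
          case True then show ?thesis using L_Ioi[OF p] by (simp add: B_def L_def)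
        next
          case False
          have "emeasure L UNIV = 1" using Lp.emeasure_space_1 by (simp add: L_def)
          then show ?thesis using False by (simp add: B_def)
        qed
        finally show "(\<integral>\<^sup>+y. indicator (B s) y \<partial>L) = ennreal (if h s = h x then 1 - p else 1)" .
      qed
      finally show "(\<integral>\<^sup>+H. of_bool (\<forall>s\<in>U. h s = h x \<longrightarrow> p < H s) \<partial>ord) = (\<Prod>s\<in>U. ennreal (if h s = h x then 1 - p else 1))" .
    qed
    define g where "g = (\<lambda>(v::nat) (j::'a) (a::nat). if j = x then (if a = v then 1 else 0) else (if a = v then 1 - p else (1::real)))"
    have mg: "\<And>v j. (\<lambda>h. ennreal (g v j (h j))) \<in> borel_measurable hash"
      unfolding hash_eq C_def
      apply (rule measurable_compose[where f="\<lambda>h. h j" for j])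
       apply (rule measurable_component_singleton, simp)
      apply (rule meas_ucm)
      done
    have "emeasure T {(h,H)\<in>space T. \<forall>s\<in>U. h s = h x \<longrightarrow> p < H s}
        = (\<integral>\<^sup>+h. \<integral>\<^sup>+H. of_bool (\<forall>s\<in>U. h s = h x \<longrightarrow> p < H s) \<partial>ord \<partial>hash)"
      by (rule FUB2) (rule meas_E)
    also have "\<dots> = (\<integral>\<^sup>+h. (\<Prod>s\<in>U. ennreal (if h s = h x then 1 - p else 1)) \<partial>hash)"
      by (simp add: inner)
    also have "\<dots> = (\<integral>\<^sup>+h. (\<Sum>v\<in>{1..n}. \<Prod>j\<in>insert x U. ennreal (g v j (h j))) \<partial>hash)"
    proof (intro nn_integral_cong)
      fix h assume h: "h \<in> space hash"
      have "(\<Sum>v\<in>{1..n}. \<Prod>j\<in>insert x U. ennreal (g v j (h j)))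
          = (\<Sum>v\<in>{1..n}. if v = h x then (\<Prod>s\<in>U. ennreal (if h s = h x then 1 - p else 1)) else 0)"
      proof (intro sum.cong refl)
        fix v assume "v \<in> {1..n}"
        have "(\<Prod>j\<in>insert x U. ennreal (g v j (h j))) = ennreal (g v x (h x)) * (\<Prod>s\<in>U. ennreal (g v s (h s)))"
          using finU xU by simp
        also have "(\<Prod>s\<in>U. ennreal (g v s (h s))) = (\<Prod>s\<in>U. ennreal (if h s = v then 1 - p else 1))"
          using xU by (intro prod.cong refl) (auto simp: g_def)
        finally show "(\<Prod>j\<in>insert x U. ennreal (g v j (h j))) = (if v = h x then (\<Prod>s\<in>U. ennreal (if h s = h x then 1 - p else 1)) else 0)"
          by (auto simp: g_def)
      qed
      also have "\<dots> = (\<Prod>s\<in>U. ennreal (if h s = h x then 1 - p else 1))"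
        using space_hash[OF h] by (simp add: sum.delta')
      finally show "(\<Prod>s\<in>U. ennreal (if h s = h x then 1 - p else 1)) = (\<Sum>v\<in>{1..n}. \<Prod>j\<in>insert x U. ennreal (g v j (h j)))" ..
    qed
    also have "\<dots> = (\<Sum>v\<in>{1..n}. \<integral>\<^sup>+h. (\<Prod>j\<in>insert x U. ennreal (g v j (h j))) \<partial>hash)"
      by (rule nn_integral_sum) (auto intro!: borel_measurable_prod_ennreal mg)
    also have "\<dots> = (\<Sum>v\<in>{1..n}. \<Prod>j\<in>insert x U. \<integral>\<^sup>+a. ennreal (g v j a) \<partial>C)"
      unfolding hash_eq using finU by (intro sum.cong refl prod_nn_PiM[OF C_prob]) (auto simp: C_def)
    also have "\<dots> = (\<Sum>v\<in>{1..n}. ennreal (1 / real n * (1 - p / real n) ^ card U))"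
    proof (intro sum.cong refl)
      fix v assume v: "v \<in> {1..n}"
      have gx: "(\<integral>\<^sup>+a. ennreal (g v x a) \<partial>C) = ennreal (1 / real n)"
        unfolding C_def using v by (subst nn_integral_ucm) (auto simp: g_def)
      have gs: "(\<integral>\<^sup>+a. ennreal (g v s a) \<partial>C) = ennreal (1 - p / real n)" if s: "s \<in> U" for s
      proof -
        have sx: "s \<noteq> x" using s xU by auto
        have "(\<Sum>a\<in>{1..n}. g v s a) = (\<Sum>a\<in>{1..n}. 1 - (if a = v then p else 0))"
          using sx by (intro sum.cong refl) (auto simp: g_def)
        also have "\<dots> = real n - p" using v by (simp add: sum_subtractf)
        finally have sm: "(\<Sum>a\<in>{1..n}. g v s a) = real n - p" .
        have "(\<integral>\<^sup>+a. ennreal (g v s a) \<partial>C) = ennreal ((\<Sum>a\<in>{1..n}. g v s a) / card {1..n})"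
          unfolding C_def using n1 p by (intro nn_integral_ucm) (auto simp: g_def)
        also have "\<dots> = ennreal (1 - p / real n)" unfolding sm using n1 by (simp add: diff_divide_distrib)
        finally show ?thesis .
      qed
      have q0: "0 \<le> 1 - p / real n" using p n1 by (simp add: field_simps)
      have "(\<Prod>j\<in>insert x U. \<integral>\<^sup>+a. ennreal (g v j a) \<partial>C) = (\<integral>\<^sup>+a. ennreal (g v x a) \<partial>C) * (\<Prod>s\<in>U. \<integral>\<^sup>+a. ennreal (g v s a) \<partial>C)"
        using finU xU by simp
      also have "(\<Prod>s\<in>U. \<integral>\<^sup>+a. ennreal (g v s a) \<partial>C) = (\<Prod>s\<in>U. ennreal (1 - p / real n))"
        by (intro prod.cong refl gs)
      also have "\<dots> = ennreal ((1 - p / real n) ^ card U)" using q0 by (simp add: ennreal_power)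
      finally show "(\<Prod>j\<in>insert x U. \<integral>\<^sup>+a. ennreal (g v j a) \<partial>C) = ennreal (1 / real n * (1 - p / real n) ^ card U)"
        using gx q0 by (simp add: ennreal_mult[symmetric])
    qed
    also have "\<dots> = ennreal ((1 - p / real n) ^ card U)"
    proof -
      have q0: "0 \<le> 1 - p / real n" using p n1 by (simp add: field_simps)
      have "(\<Sum>v\<in>{1..n}. ennreal (1 / real n * (1 - p / real n) ^ card U)) = ennreal (\<Sum>v\<in>{1..n}. 1 / real n * (1 - p / real n) ^ card U)"
        using q0 by (intro sum_ennreal) auto
      also have "(\<Sum>v\<in>{1..n}. 1 / real n * (1 - p / real n) ^ card U) = (1 - p / real n) ^ card U"
        using n1 by simp
      finally show ?thesis .
    qed
    finally show "emeasure T {(h,H)\<in>space T. \<forall>s\<in>U. h s = h x \<longrightarrow> p < H s} = ennreal ((1 - p / real n) ^ card U)" .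
  qed

  have C1: "\<forall>p\<in>{0..1::real}. measure T {(h, H) \<in> space T. \<forall>k\<in>{1..t}. placed (S k) x h (H(x := p))} \<ge> exp (- p)"
  proof
    fix p :: real assume p: "p \<in> {0..1}"
    have seteq: "{(h, H) \<in> space T. \<forall>k\<in>{1..t}. placed (S k) x h (H(x := p))} = {(h,H)\<in>space T. \<forall>s\<in>U. h s = h x \<longrightarrow> p < H s}"
      by (auto simp: placed_def U_def)
    have q0: "0 \<le> 1 - p / real n" using p n1 by (simp add: field_simps)
    have "measure T {(h,H)\<in>space T. \<forall>s\<in>U. h s = h x \<longrightarrow> p < H s} = (1 - p / real n) ^ card U"
      using KEY[of p] p q0 by (simp add: measure_def)
    moreover have "exp (- p) \<le> (1 - p / real n) ^ card U"
      using exp_bound[OF n1 cardU] p by auto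
    ultimately show "measure T {(h, H) \<in> space T. \<forall>k\<in>{1..t}. placed (S k) x h (H(x := p))} \<ge> exp (- p)"
      unfolding seteq by simp
  qed

  define F where "F = {(h, H) \<in> space T. \<exists>k\<in>{1..t}. \<not> placed (S k) x h H}"
  have pl: "(\<exists>k\<in>{1..t}. \<not> placed (S k) x h H) \<longleftrightarrow> \<not> (\<forall>s\<in>U. h s = h x \<longrightarrow> H x < H s)" for h H
    unfolding placed_def U_def by blast
  have F_eq: "F = space T - A"
    unfolding F_def A_def pl by blast
  have memF: "z \<in> F \<longleftrightarrow> z \<in> space T \<and> (\<exists>k\<in>{1..t}. \<not> placed (S k) x (fst z) (snd z))" for z
    by (cases z) (simp add: F_def)
  have meas_F: "F \<in> sets T" unfolding F_eq using meas_A by (rule sets.compl_sets)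
  define Q where "Q = (\<lambda>z::('a \<Rightarrow> nat) \<times> real. \<integral>\<^sup>+H. of_bool (\<forall>s\<in>U. fst z s = fst z x \<longrightarrow> snd z < H s) \<partial>ord)"
  have inner2: "(\<integral>\<^sup>+H. of_bool (\<forall>s\<in>U. h s = h x \<longrightarrow> H x < H s) \<partial>ord) = (\<integral>\<^sup>+y. Q (h, y) \<partial>L)"
    if hsp: "h \<in> space hash" for h :: "'a \<Rightarrow> nat"
  proof -
    define R where "R = PiM (UNIV - {x}) (\<lambda>_. L)"
    interpret Rp: prob_space R unfolding R_def by (rule prob_space_PiM) (rule Lp)
    have PM1: "(\<lambda>z. of_bool (\<forall>s\<in>U. fst z s = fst z x \<longrightarrow> snd z x < snd z s) :: ennreal) \<in> borel_measurable (hash \<Otimes>\<^sub>M ord)"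
      unfolding hash_eq ord_eq C_def L_def using finU by measurable
    have PM2: "(\<lambda>z. of_bool (\<forall>s\<in>U. fst z s = fst z x \<longrightarrow> y < snd z s) :: ennreal) \<in> borel_measurable (hash \<Otimes>\<^sub>M ord)" for y :: real
      unfolding hash_eq ord_eq C_def L_def using finU by measurable
    have m1: "(\<lambda>H. of_bool (\<forall>s\<in>U. h s = h x \<longrightarrow> H x < H s) :: ennreal) \<in> borel_measurable (PiM UNIV (\<lambda>_. L))"
      using measurable_Pair2[OF PM1 hsp] by (simp add: ord_eq)
    have m2: "(\<lambda>H. of_bool (\<forall>s\<in>U. h s = h x \<longrightarrow> y < H s) :: ennreal) \<in> borel_measurable (PiM UNIV (\<lambda>_. L))" for y :: real
      using measurable_Pair2[OF PM2 hsp] by (simp add: ord_eq)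
    have upd: "(\<forall>s\<in>U. h s = h x \<longrightarrow> z < (w(x:=y)) s) = (\<forall>s\<in>U. h s = h x \<longrightarrow> z < w s)" for w :: "'a \<Rightarrow> real" and y z
      using xU by (auto split: if_splits)
    have Qeq: "Q (h, y) = (\<integral>\<^sup>+w. of_bool (\<forall>s\<in>U. h s = h x \<longrightarrow> y < w s) \<partial>R)" for y
    proof -
      have "Q (h, y) = (\<integral>\<^sup>+y'. \<integral>\<^sup>+w. of_bool (\<forall>s\<in>U. h s = h x \<longrightarrow> y < (w(x:=y')) s) \<partial>R \<partial>L)"
        unfolding Q_def ord_eq R_def using split_coord[OF Lp m2[of y], of x] by simp
      also have "\<dots> = (\<integral>\<^sup>+y'. (\<integral>\<^sup>+w. of_bool (\<forall>s\<in>U. h s = h x \<longrightarrow> y < w s) \<partial>R) \<partial>L)"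
        by (simp only: upd)
      also have "\<dots> = (\<integral>\<^sup>+w. of_bool (\<forall>s\<in>U. h s = h x \<longrightarrow> y < w s) \<partial>R)"
        by (simp add: Lp.emeasure_space_1)
      finally show ?thesis .
    qed
    have "(\<integral>\<^sup>+H. of_bool (\<forall>s\<in>U. h s = h x \<longrightarrow> H x < H s) \<partial>ord)
        = (\<integral>\<^sup>+y. \<integral>\<^sup>+w. of_bool (\<forall>s\<in>U. h s = h x \<longrightarrow> (w(x:=y)) x < (w(x:=y)) s) \<partial>R \<partial>L)"
      unfolding ord_eq R_def by (rule split_coord[OF Lp m1])
    also have "\<dots> = (\<integral>\<^sup>+y. \<integral>\<^sup>+w. of_bool (\<forall>s\<in>U. h s = h x \<longrightarrow> y < w s) \<partial>R \<partial>L)"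
      by (simp only: upd fun_upd_same)
    also have "\<dots> = (\<integral>\<^sup>+y. Q (h, y) \<partial>L)"
      by (simp only: Qeq)
    finally show ?thesis .
  qed
  have measQ: "Q \<in> borel_measurable (hash \<Otimes>\<^sub>M L)"
  proof -
    have "(\<lambda>(z, H). of_bool (\<forall>s\<in>U. fst z s = fst z x \<longrightarrow> snd z < H s) :: ennreal) \<in> borel_measurable ((hash \<Otimes>\<^sub>M L) \<Otimes>\<^sub>M ord)"
      unfolding hash_eq ord_eq C_def L_def using finU by measurable
    then show ?thesis unfolding Q_def by (rule Os.borel_measurable_nn_integral)
  qed
  have intexp: "(\<integral>\<^sup>+y. ennreal (exp (- y)) \<partial>L) = ennreal (1 - exp (- 1))"
  proof -
    have hi: "((\<lambda>y. exp (- y)) has_integral (1 - exp (- 1))) {0..1::real}"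
    proof -
      have "((\<lambda>y. exp (- y)) has_integral ((- exp (- 1)) - (- exp (- 0)))) {0..1::real}"
        by (rule fundamental_theorem_of_calculus)
           (auto intro!: derivative_eq_intros simp: has_real_derivative_iff_has_vector_derivative[symmetric])
      then show ?thesis by simp
    qed
    have "(\<integral>\<^sup>+y. ennreal (exp (- y)) \<partial>L) = (\<integral>\<^sup>+y. ennreal (exp (- y)) * indicator {0..1} y \<partial>lborel) / emeasure lborel {0..1::real}"
      unfolding L_def by (rule nn_integral_uniform_measure) auto
    also have "(\<integral>\<^sup>+y. ennreal (exp (- y)) * indicator {0..1} y \<partial>lborel) = ennreal (1 - exp (- 1))"
      by (rule nn_integral_has_integral_lebesgue'[OF _ hi]) simp
    finally show ?thesis by (simp add: divide_ennreal_def)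
  qed
  have lowA: "ennreal (1 - exp (- 1)) \<le> emeasure T A"
  proof -
    have "emeasure T A = (\<integral>\<^sup>+h. \<integral>\<^sup>+H. of_bool (\<forall>s\<in>U. h s = h x \<longrightarrow> H x < H s) \<partial>ord \<partial>hash)"
      unfolding A_def by (rule FUB2) (use meas_A A_def in simp)
    also have "\<dots> = (\<integral>\<^sup>+h. \<integral>\<^sup>+y. Q (h, y) \<partial>L \<partial>hash)"
      by (rule nn_integral_cong) (rule inner2)
    also have "\<dots> = (\<integral>\<^sup>+y. \<integral>\<^sup>+h. Q (h, y) \<partial>hash \<partial>L)"
      by (rule HL.Fubini'[symmetric]) (simp add: measQ)
    also have "\<dots> = (\<integral>\<^sup>+y. emeasure T {(h,H)\<in>space T. \<forall>s\<in>U. h s = h x \<longrightarrow> y < H s} \<partial>L)"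
      by (intro nn_integral_cong) (simp add: FUB2[OF meas_E] Q_def)
    also have "\<dots> \<ge> (\<integral>\<^sup>+y. ennreal (exp (- y)) \<partial>L)"
    proof (rule nn_integral_mono_AE)
      show "AE y in L. ennreal (exp (- y)) \<le> emeasure T {(h,H)\<in>space T. \<forall>s\<in>U. h s = h x \<longrightarrow> y < H s}"
        unfolding L_def
      proof (rule AE_uniform_measureI, simp, intro AE_I2 impI)
        fix y :: real assume y: "y \<in> {0..1}"
        then have "exp (- y) \<le> (1 - y / real n) ^ card U" using exp_bound[OF n1 cardU] by auto
        then show "ennreal (exp (- y)) \<le> emeasure T {(h,H)\<in>space T. \<forall>s\<in>U. h s = h x \<longrightarrow> y < H s}"
          using KEY[of y] y by (simp add: ennreal_leI)
      qed
    qed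
    finally show ?thesis using intexp by simp
  qed
  have mA: "1 - exp (- 1) \<le> measure T A"
    using lowA Ts.emeasure_eq_measure[of A] by (simp add: ennreal_le_iff)
  have C2: "measure T F \<le> exp (- 1)"
    using mA Ts.prob_compl[OF meas_A] by (simp add: F_eq)
  have lb: "(LBINT p=0..1. 1 - exp (- p)) = exp (- 1::real)"
  proof -
    have "(LBINT p=ereal 0..ereal 1. 1 - exp (- p)) = (1 + exp (- 1)) - (0 + exp (- 0::real))"
      by (rule interval_integral_FTC_finite[where F="\<lambda>p. p + exp (- p)"])
         (auto intro!: continuous_intros derivative_eq_intros
               simp: has_real_derivative_iff_has_vector_derivative[symmetric])
    then show ?thesis by (simp add: zero_ereal_def one_ereal_def)
  qed

  have C3: "{\<omega> \<in> space (PiM {..<m} (\<lambda>_. T)). \<forall>j < m. \<exists>k \<in> {1..t}. \<not> placed (S k) x (fst (\<omega> j)) (snd (\<omega> j))}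
          \<in> sets (PiM {..<m} (\<lambda>_. T))
        \<and> measure (PiM {..<m} (\<lambda>_. T))
          {\<omega> \<in> space (PiM {..<m} (\<lambda>_. T)). \<forall>j < m. \<exists>k \<in> {1..t}. \<not> placed (S k) x (fst (\<omega> j)) (snd (\<omega> j))}
        \<le> exp (- real m)" for m :: nat
  proof -
    interpret FP: finite_product_prob_space "\<lambda>_. T" "{..<m}" by unfold_locales simp
    have evt: "{\<omega> \<in> space (PiM {..<m} (\<lambda>_. T)). \<forall>j < m. \<exists>k \<in> {1..t}. \<not> placed (S k) x (fst (\<omega> j)) (snd (\<omega> j))}
        = PiE {..<m} (\<lambda>_. F)"
    proof (rule set_eqI)
      fix w :: "nat \<Rightarrow> ('a \<Rightarrow> nat) \<times> ('a \<Rightarrow> real)"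
      have sp: "w \<in> space (PiM {..<m} (\<lambda>_. T)) \<longleftrightarrow> (\<forall>j\<in>{..<m}. w j \<in> space T) \<and> w \<in> extensional {..<m}"
        by (simp add: space_PiM PiE_iff)
      have pe: "w \<in> PiE {..<m} (\<lambda>_. F) \<longleftrightarrow> (\<forall>j\<in>{..<m}. w j \<in> F) \<and> w \<in> extensional {..<m}"
        by (simp add: PiE_iff)
      show "w \<in> {\<omega> \<in> space (PiM {..<m} (\<lambda>_. T)). \<forall>j < m. \<exists>k \<in> {1..t}. \<not> placed (S k) x (fst (\<omega> j)) (snd (\<omega> j))} \<longleftrightarrow> w \<in> PiE {..<m} (\<lambda>_. F)"
        unfolding pe mem_Collect_eq sp memF lessThan_iff by blast
    qed
    have "measure (PiM {..<m} (\<lambda>_. T)) (PiE {..<m} (\<lambda>_. F)) = (\<Prod>j\<in>{..<m}. measure T F)"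
      using meas_F by (intro FP.finite_measure_PiM_emb) simp
    also have "\<dots> = measure T F ^ m" by simp
    also have "\<dots> \<le> exp (- 1) ^ m" using C2 by (intro power_mono) auto
    also have "\<dots> = exp (- real m)" by (simp add: exp_of_nat_mult[symmetric])
    finally show ?thesis unfolding evt using meas_F by (auto intro!: sets_PiM_I_finite)
  qed
  have C28: "measure (PiM {..<28} (\<lambda>_. T))
          {\<omega> \<in> space (PiM {..<28::nat} (\<lambda>_. T)). \<forall>j < 28. \<exists>k \<in> {1..t}. \<not> placed (S k) x (fst (\<omega> j)) (snd (\<omega> j))}
        \<le> 1 / 2 ^ 40"
    using C3[of 28] e28 by linarith
  have sF: "{(h, H) \<in> space T. \<exists>k \<in> {1..t}. \<not> placed (S k) x h H} \<in> sets T" using meas_F by (simp add: F_def)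
  have mF: "measure T {(h, H) \<in> space T. \<exists>k \<in> {1..t}. \<not> placed (S k) x h H} \<le> (LBINT p=0..1. 1 - exp (- p))"
    using C2 lb by (simp add: F_def)
  show ?thesis
    unfolding n_def[symmetric] T_def[symmetric]
    using C1 sF mF lb C3 C28 by blast
qed

end
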